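(* $M_2(3)=4$, $M_3(3)=8$, and for every integer $k\ge 4$, $$\tfrac{3}{4}\,2^k+2\le M_k(3)\le 2^k-1.$$
   Context: All graphs are finite and simple. A path $v_1,\ldots,v_r$ in a graph $G$ is degree-monotone if $\deg_G(v_1)\le\cdots\le\deg_G(v_r)$; its order is $r$. Let $mp(G)$ be the maximum order of a degree-monotone path in $G$. For a $k$-edge-coloring of $K_n$ with colors $1,\ldots,k$, let $G_j$ be the spanning subgraph consisting of the edges colored $j$ (degrees taken in $G_j$). $M_k(m)$ is the minimum integer $M$ such that for every $n\ge M$ and every $k$-edge-coloring of $K_n$ there is some $j$ with $mp(G_j)\ge m$. *)

theory Defs
  imports Complex_Main
begin

text \<open>The complete graph K_n has vertex set {0..<n}. A k-edge-colouring is a symmetric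
function c assigning to every pair of distinct vertices a colour in {1..k}.\<close>

definition edge_coloring :: "nat \<Rightarrow> nat \<Rightarrow> (nat \<Rightarrow> nat \<Rightarrow> nat) \<Rightarrow> bool" where
  "edge_coloring k n c \<longleftrightarrow>
     (\<forall>u v. u < n \<and> v < n \<and> u \<noteq> v \<longrightarrow> c u v = c v u \<and> c u v \<in> {1..k})"

definition col_edge :: "nat \<Rightarrow> (nat \<Rightarrow> nat \<Rightarrow> nat) \<Rightarrow> nat \<Rightarrow> nat \<Rightarrow> nat \<Rightarrow> bool" where
  "col_edge n c j u v \<longleftrightarrow> u < n \<and> v < n \<and> u \<noteq> v \<and> c u v = j"

definition col_deg :: "nat \<Rightarrow> (nat \<Rightarrow> nat \<Rightarrow> nat) \<Rightarrow> nat \<Rightarrow> nat \<Rightarrow> nat" where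
  "col_deg n c j v = card {u. col_edge n c j v u}"

text \<open>A degree-monotone path in G_j, given as the list of its vertices (order = length).\<close>
definition dm_path :: "nat \<Rightarrow> (nat \<Rightarrow> nat \<Rightarrow> nat) \<Rightarrow> nat \<Rightarrow> nat list \<Rightarrow> bool" where
  "dm_path n c j vs \<longleftrightarrow> vs \<noteq> [] \<and> distinct vs \<and> set vs \<subseteq> {..<n} \<and>
     (\<forall>i. Suc i < length vs \<longrightarrow> col_edge n c j (vs ! i) (vs ! Suc i)
            \<and> col_deg n c j (vs ! i) \<le> col_deg n c j (vs ! Suc i))"

definition mp :: "nat \<Rightarrow> (nat \<Rightarrow> nat \<Rightarrow> nat) \<Rightarrow> nat \<Rightarrow> nat" where
  "mp n c j = Max (length ` {vs. dm_path n c j vs})"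

definition mk_good :: "nat \<Rightarrow> nat \<Rightarrow> nat \<Rightarrow> bool" where
  "mk_good k m M \<longleftrightarrow> (\<forall>n \<ge> M. \<forall>c. edge_coloring k n c \<longrightarrow> (\<exists>j \<in> {1..k}. mp n c j \<ge> m))"

definition M_k :: "nat \<Rightarrow> nat \<Rightarrow> nat" where
  "M_k k m = (LEAST M. mk_good k m M)"

end

theory Submission
  imports Defs
begin


definition tri :: "nat \<Rightarrow> (nat \<Rightarrow> nat \<Rightarrow> nat) \<Rightarrow> nat \<Rightarrow> nat \<Rightarrow> nat \<Rightarrow> nat \<Rightarrow> bool" where
  "tri n c j u v w \<longleftrightarrow> col_edge n c j u v \<and> col_edge n c j v w \<and> u \<noteq> w \<and>
     col_deg n c j u \<le> col_deg n c j v \<and> col_deg n c j v \<le> col_deg n c j w"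

definition avoid :: "nat \<Rightarrow> (nat \<Rightarrow> nat \<Rightarrow> nat) \<Rightarrow> nat \<Rightarrow> bool" where
  "avoid n c j \<longleftrightarrow> (\<forall>u v w. \<not> tri n c j u v w)"

lemma finite_dm: "finite {vs. dm_path n c j vs}"
proof -
  have "{vs. dm_path n c j vs} \<subseteq> {xs. set xs \<subseteq> {..<n} \<and> length xs \<le> n}"
  proof
    fix vs assume "vs \<in> {vs. dm_path n c j vs}"
    then have d: "distinct vs" "set vs \<subseteq> {..<n}" by (auto simp: dm_path_def)
    then have "length vs \<le> n"
      using distinct_card[OF d(1)] card_mono[OF _ d(2)] by fastforce
    with d show "vs \<in> {xs. set xs \<subseteq> {..<n} \<and> length xs \<le> n}" by auto
  qed
  then show ?thesis using finite_lists_length_le[of "{..<n}" n] finite_subset by blast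
qed

lemma mp_ge3:
  assumes "tri n c j u v w"
  shows "3 \<le> mp n c j"
proof -
  have "dm_path n c j [u, v, w]"
    using assms unfolding tri_def dm_path_def col_edge_def
    by (auto simp: less_Suc_eq nth_Cons split: nat.splits)
  then have "length [u,v,w] \<in> length ` {vs. dm_path n c j vs}" by blast
  then show ?thesis unfolding mp_def using finite_dm
    by (metis (no_types, lifting) Max_ge finite_imageI length_Cons list.size(3) numeral_3_eq_3)
qed

lemma mp_lt3:
  assumes "0 < n" "avoid n c j"
  shows "mp n c j < 3"
proof -
  have ne: "dm_path n c j [0]" using assms(1) by (simp add: dm_path_def)
  have "\<forall>vs. dm_path n c j vs \<longrightarrow> length vs < 3"
  proof (intro allI impI, rule ccontr)
    fix vs assume p: "dm_path n c j vs" and "\<not> length vs < 3"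
    then have l: "2 < length vs" by simp
    from p l have e1: "col_edge n c j (vs!0) (vs!1)" "col_deg n c j (vs!0) \<le> col_deg n c j (vs!1)"
      by (auto simp: dm_path_def)
    from p l have e2: "col_edge n c j (vs!1) (vs!2)" "col_deg n c j (vs!1) \<le> col_deg n c j (vs!2)"
      using dm_path_def[of n c j vs] by (metis Suc_1 numeral_3_eq_3 Suc_lessD less_Suc_eq One_nat_def)+
    from p l have "vs!0 \<noteq> vs!2" by (auto simp: dm_path_def nth_eq_iff_index_eq)
    with e1 e2 have "tri n c j (vs!0) (vs!1) (vs!2)" by (simp add: tri_def)
    with assms(2) show False by (simp add: avoid_def)
  qed
  moreover have "length ` {vs. dm_path n c j vs} \<noteq> {}" using ne by blast
  ultimately show ?thesis unfolding mp_def using finite_dm by auto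
qed



definition comb :: "nat \<Rightarrow> nat \<Rightarrow> (nat \<Rightarrow> nat \<Rightarrow> nat) \<Rightarrow> (nat \<Rightarrow> nat \<Rightarrow> nat) \<Rightarrow> nat \<Rightarrow> nat \<Rightarrow> nat" where
  "comb k a c1 c2 u v = (if u < a \<and> v < a then c1 u v else if a \<le> u \<and> a \<le> v then c2 (u-a) (v-a) else Suc k)"

lemma comb_coloring:
  assumes "edge_coloring k a c1" "edge_coloring k b c2"
  shows "edge_coloring (Suc k) (a+b) (comb k a c1 c2)"
  unfolding edge_coloring_def
proof (intro allI impI)
  fix u v assume h: "u < a + b \<and> v < a + b \<and> u \<noteq> v"
  show "comb k a c1 c2 u v = comb k a c1 c2 v u \<and> comb k a c1 c2 u v \<in> {1..Suc k}"
  proof (cases "u < a \<and> v < a")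
    case True
    have "c1 u v = c1 v u \<and> c1 u v \<in> {1..k}" using assms(1) h True unfolding edge_coloring_def by blast
    then show ?thesis using True unfolding comb_def by auto
  next
    case F: False
    show ?thesis
    proof (cases "a \<le> u \<and> a \<le> v")
      case True
      then have "u - a < b" "v - a < b" "u - a \<noteq> v - a" using h by auto
      then have "c2 (u-a) (v-a) = c2 (v-a) (u-a) \<and> c2 (u-a) (v-a) \<in> {1..k}"
        using assms(2) unfolding edge_coloring_def by blast
      then show ?thesis using True F unfolding comb_def by auto
    next
      case False then show ?thesis using F unfolding comb_def by auto
    qed
  qed
qed


lemma col_A:
  assumes "edge_coloring k a c1" "u < a" "u < a + b"
  shows "col_edge (a+b) (comb k a c1 c2) j u x \<longleftrightarrow>
     (if j = Suc k then a \<le> x \<and> x < a + b else col_edge a c1 j u x)"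
proof (cases "x < a")
  case True
  then have "u \<noteq> x \<Longrightarrow> c1 u x \<in> {1..k}" using assms(1,2) unfolding edge_coloring_def by blast
  then show ?thesis using True assms unfolding col_edge_def comb_def by auto
next
  case False then show ?thesis using assms unfolding col_edge_def comb_def by auto
qed

lemma col_B:
  assumes "edge_coloring k b c2" "a \<le> u" "u < a + b"
  shows "col_edge (a+b) (comb k a c1 c2) j u x \<longleftrightarrow>
     (if j = Suc k then x < a else a \<le> x \<and> col_edge b c2 j (u - a) (x - a))"
proof (cases "a \<le> x")
  case True
  have "x < a + b \<Longrightarrow> u \<noteq> x \<Longrightarrow> c2 (u-a) (x-a) \<in> {1..k}"
    using assms True unfolding edge_coloring_def by (metis add.commute less_diff_conv2 eq_diff_iff)
  moreover have "(x < a + b \<and> u \<noteq> x) = (x - a < b \<and> u - a \<noteq> x - a)"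
    using True assms by auto
  ultimately show ?thesis using True assms unfolding col_edge_def comb_def by auto
next
  case False then show ?thesis using assms unfolding col_edge_def comb_def by auto
qed

lemma deg_A:
  assumes "edge_coloring k a c1" "u < a" "j \<noteq> Suc k"
  shows "col_deg (a+b) (comb k a c1 c2) j u = col_deg a c1 j u"
proof -
  have "{x. col_edge (a+b) (comb k a c1 c2) j u x} = {x. col_edge a c1 j u x}"
    using col_A[OF assms(1,2), of b c2 j] assms(2,3) by auto
  then show ?thesis by (simp add: col_deg_def)
qed

lemma deg_B:
  assumes "edge_coloring k b c2" "a \<le> u" "u < a + b" "j \<noteq> Suc k"
  shows "col_deg (a+b) (comb k a c1 c2) j u = col_deg b c2 j (u - a)"
proof -
  have "{x. col_edge (a+b) (comb k a c1 c2) j u x} = (\<lambda>y. y + a) ` {y. col_edge b c2 j (u-a) y}"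
  proof (rule set_eqI, rule iffI)
    fix x assume "x \<in> {x. col_edge (a+b) (comb k a c1 c2) j u x}"
    then have "a \<le> x" "col_edge b c2 j (u-a) (x-a)"
      using col_B[OF assms(1,2,3), of c1 j x] assms(4) by auto
    then show "x \<in> (\<lambda>y. y + a) ` {y. col_edge b c2 j (u-a) y}"
      by (metis (mono_tags, lifting) image_eqI le_add_diff_inverse2 mem_Collect_eq)
  next
    fix x assume "x \<in> (\<lambda>y. y + a) ` {y. col_edge b c2 j (u-a) y}"
    then obtain y where "x = y + a" "col_edge b c2 j (u-a) y" by auto
    then show "x \<in> {x. col_edge (a+b) (comb k a c1 c2) j u x}"
      using col_B[OF assms(1,2,3), of c1 j x] assms(4) by auto
  qed
  then show ?thesis unfolding col_deg_def by (simp add: card_image)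
qed

lemma deg_new_A:
  assumes "edge_coloring k a c1" "u < a"
  shows "col_deg (a+b) (comb k a c1 c2) (Suc k) u = b"
proof -
  have "{x. col_edge (a+b) (comb k a c1 c2) (Suc k) u x} = {a..<a+b}"
    using col_A[OF assms(1,2), of b c2 "Suc k"] assms(2) by (simp add: set_eq_iff)
  then show ?thesis by (simp add: col_deg_def)
qed

lemma deg_new_B:
  assumes "edge_coloring k b c2" "a \<le> u" "u < a + b"
  shows "col_deg (a+b) (comb k a c1 c2) (Suc k) u = a"
proof -
  have "{x. col_edge (a+b) (comb k a c1 c2) (Suc k) u x} = {..<a}"
    using col_B[OF assms(1,2,3), of c1 "Suc k"] by (simp add: set_eq_iff)
  then show ?thesis by (simp add: col_deg_def)
qed

lemma col_edge_lt: "col_edge n c j u v \<Longrightarrow> u < n \<and> v < n \<and> u \<noteq> v"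
  by (simp add: col_edge_def)

lemma comb_avoid:
  assumes c1: "edge_coloring k a c1" and c2: "edge_coloring k b c2"
    and a1: "\<forall>j. avoid a c1 j" and a2: "\<forall>j. avoid b c2 j" and ab: "a \<noteq> b"
  shows "avoid (a+b) (comb k a c1 c2) j"
  unfolding avoid_def
proof (intro allI notI)
  fix u v w assume t: "tri (a+b) (comb k a c1 c2) j u v w"
  let ?C = "comb k a c1 c2"
  have e1: "col_edge (a+b) ?C j u v" and e2: "col_edge (a+b) ?C j v w" and uw: "u \<noteq> w"
    and d1: "col_deg (a+b) ?C j u \<le> col_deg (a+b) ?C j v"
    and d2: "col_deg (a+b) ?C j v \<le> col_deg (a+b) ?C j w" using t by (auto simp: tri_def)
  have lt: "u < a+b" "v < a+b" "w < a+b" using e1 e2 col_edge_lt by blast+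
  show False
  proof (cases "j = Suc k")
    case True
    have side: "\<And>x y. x < a + b \<Longrightarrow> col_edge (a+b) ?C j x y \<Longrightarrow> (x < a \<longleftrightarrow> \<not> y < a)"
    proof -
      fix x y assume "x < a + b" "col_edge (a+b) ?C j x y"
      then show "(x < a \<longleftrightarrow> \<not> y < a)"
        using col_A[OF c1, of x b c2 j y] col_B[OF c2, of a x c1 j y] True
        by (cases "x < a") auto
    qed
    have dg: "\<And>x. x < a + b \<Longrightarrow> col_deg (a+b) ?C j x = (if x < a then b else a)"
      using deg_new_A[OF c1] deg_new_B[OF c2] True by (metis not_less)
    have "(u < a) = (w < a)" "(u < a) = (\<not> v < a)" using side[OF lt(1) e1] side[OF lt(2) e2] by auto
    then show False using d1 d2 dg lt ab by (cases "u < a") auto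
  next
    case False
    show False
    proof (cases "u < a")
      case True
      have "col_edge a c1 j u v" using e1 col_A[OF c1 True lt(1)] False by simp
      then have vA: "v < a" by (simp add: col_edge_def)
      have "col_edge a c1 j v w" using e2 col_A[OF c1 vA lt(2)] False by simp
      then have wA: "w < a" by (simp add: col_edge_def)
      have "tri a c1 j u v w"
        using \<open>col_edge a c1 j u v\<close> \<open>col_edge a c1 j v w\<close> uw d1 d2
          deg_A[OF c1 True False, of b c2] deg_A[OF c1 vA False, of b c2] deg_A[OF c1 wA False, of b c2]
        by (simp add: tri_def)
      then show False using a1 by (simp add: avoid_def)
    next
      case uB: False
      then have uB': "a \<le> u" by simp
      have ev: "a \<le> v" "col_edge b c2 j (u-a) (v-a)" using e1 col_B[OF c2 uB' lt(1)] False by auto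
      have ew: "a \<le> w" "col_edge b c2 j (v-a) (w-a)" using e2 col_B[OF c2 ev(1) lt(2)] False by auto
      have "u - a \<noteq> w - a" using uw uB' ew(1) by auto
      then have "tri b c2 j (u-a) (v-a) (w-a)"
        using ev ew d1 d2 deg_B[OF c2 uB' lt(1) False] deg_B[OF c2 ev(1) lt(2) False]
          deg_B[OF c2 ew(1) lt(3) False]
        by (simp add: tri_def)
      then show False using a2 by (simp add: avoid_def)
    qed
  qed
qed



definition dl :: "nat \<Rightarrow> nat list list \<Rightarrow> nat \<Rightarrow> nat \<Rightarrow> nat" where
  "dl n M j v = length (filter (\<lambda>u. u \<noteq> v \<and> M!v!u = j) [0..<n])"

definition chk :: "nat \<Rightarrow> nat list list \<Rightarrow> nat \<Rightarrow> bool" where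
  "chk n M j = (\<forall>u \<in> set [0..<n]. \<forall>v \<in> set [0..<n]. \<forall>w \<in> set [0..<n].
     \<not> (u \<noteq> v \<and> M!u!v = j \<and> v \<noteq> w \<and> M!v!w = j \<and> u \<noteq> w \<and> dl n M j u \<le> dl n M j v \<and> dl n M j v \<le> dl n M j w))"

definition chkc :: "nat \<Rightarrow> nat \<Rightarrow> nat list list \<Rightarrow> bool" where
  "chkc k n M = (\<forall>u \<in> set [0..<n]. \<forall>v \<in> set [0..<n]. u \<noteq> v \<longrightarrow> M!u!v = M!v!u \<and> 1 \<le> M!u!v \<and> M!u!v \<le> k)"

lemma dl_deg: assumes "v < n" shows "col_deg n (\<lambda>u v. M!u!v) j v = dl n M j v"
proof -
  have eq: "{u. col_edge n (\<lambda>u v. M!u!v) j v u} = set (filter (\<lambda>u. u \<noteq> v \<and> M!v!u = j) [0..<n])"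
    using assms by (auto simp: col_edge_def)
  have d: "distinct (filter (\<lambda>u. u \<noteq> v \<and> M!v!u = j) [0..<n])" by simp
  show ?thesis unfolding col_deg_def dl_def eq by (rule distinct_card[OF d])
qed

lemma chk_avoid: "chk n M j \<Longrightarrow> avoid n (\<lambda>u v. M!u!v) j"
proof (unfold avoid_def, intro allI notI)
  fix u v w assume c: "chk n M j" and t: "tri n (\<lambda>u v. M!u!v) j u v w"
  then have l: "u < n" "v < n" "w < n" by (auto simp: tri_def col_edge_def)
  have ch: "\<forall>u<n. \<forall>v<n. \<forall>w<n. \<not> (u \<noteq> v \<and> M!u!v = j \<and> v \<noteq> w \<and> M!v!w = j \<and> u \<noteq> w \<and> dl n M j u \<le> dl n M j v \<and> dl n M j v \<le> dl n M j w)"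
    using c by (simp add: chk_def)
  then have "\<not> (u \<noteq> v \<and> M!u!v = j \<and> v \<noteq> w \<and> M!v!w = j \<and> u \<noteq> w \<and> dl n M j u \<le> dl n M j v \<and> dl n M j v \<le> dl n M j w)"
    using l by blast
  then show False using t unfolding tri_def dl_deg[OF l(1)] dl_deg[OF l(2)] dl_deg[OF l(3)]
    by (auto simp: col_edge_def)
qed

lemma chkc_col: "chkc k n M \<Longrightarrow> edge_coloring k n (\<lambda>u v. M!u!v)"
  unfolding chkc_def edge_coloring_def by auto

lemma avoid_out:
  assumes "edge_coloring k n c" "j \<notin> {1..k}"
  shows "avoid n c j"
  using assms unfolding avoid_def tri_def col_edge_def edge_coloring_def by auto

lemma avoid_small:
  assumes "n \<le> 2"
  shows "avoid n c j"
  using assms unfolding avoid_def tri_def col_edge_def by auto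

definition M3 :: "nat list list" where "M3 = [[0, 1, 1], [1, 0, 2], [1, 2, 0]]"
definition M4 :: "nat list list" where "M4 = [[0, 1, 1, 1], [1, 0, 2, 2], [1, 2, 0, 3], [1, 2, 3, 0]]"
definition M5 :: "nat list list" where "M5 = [[0, 1, 1, 1, 2], [1, 0, 2, 2, 1], [1, 2, 0, 3, 1], [1, 2, 3, 0, 1], [2, 1, 1, 1, 0]]"
definition M6 :: "nat list list" where "M6 = [[0, 1, 1, 1, 2, 3], [1, 0, 2, 2, 3, 2], [1, 2, 0, 3, 2, 1], [1, 2, 3, 0, 2, 1], [2, 3, 2, 2, 0, 1], [3, 2, 1, 1, 1, 0]]"
definition M7 :: "nat list list" where "M7 = [[0, 1, 2, 1, 3, 3, 2], [1, 0, 1, 2, 3, 3, 1], [2, 1, 0, 1, 2, 2, 3], [1, 2, 1, 0, 3, 3, 1], [3, 3, 2, 3, 0, 1, 2], [3, 3, 2, 3, 1, 0, 2], [2, 1, 3, 1, 2, 2, 0]]"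

lemma M7_ok: "chkc 3 7 M7 \<and> chk 7 M7 1 \<and> chk 7 M7 2 \<and> chk 7 M7 3"
  by code_simp


lemma M3_ok: "chkc 2 3 M3 \<and> chk 3 M3 1 \<and> chk 3 M3 2" by code_simp
lemma M4_ok: "chkc 3 4 M4 \<and> chk 4 M4 1 \<and> chk 4 M4 2 \<and> chk 4 M4 3" by code_simp
lemma M5_ok: "chkc 3 5 M5 \<and> chk 5 M5 1 \<and> chk 5 M5 2 \<and> chk 5 M5 3" by code_simp
lemma M6_ok: "chkc 3 6 M6 \<and> chk 6 M6 1 \<and> chk 6 M6 2 \<and> chk 6 M6 3" by code_simp

definition goodcol :: "nat \<Rightarrow> nat \<Rightarrow> (nat \<Rightarrow> nat \<Rightarrow> nat) \<Rightarrow> bool" where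
  "goodcol k m c \<longleftrightarrow> edge_coloring k m c \<and> (\<forall>j. avoid m c j)"

lemma goodcol_mat:
  assumes "chkc k m M" "\<forall>j\<in>{1..k}. chk m M j"
  shows "goodcol k m (\<lambda>u v. M!u!v)"
  using assms chkc_col chk_avoid avoid_out unfolding goodcol_def by blast

lemma goodcol_K3: "goodcol 2 3 (\<lambda>u v. M3!u!v)"
  using M3_ok by (intro goodcol_mat) (auto simp: atLeastAtMost_iff le_Suc_eq numeral_2_eq_2)

lemma three_cases: "j \<in> {1..3::nat} \<Longrightarrow> j = 1 \<or> j = 2 \<or> j = 3" by auto

lemma base3: "m \<le> 7 \<Longrightarrow> \<exists>c. goodcol 3 m c"
proof -
  assume m: "m \<le> 7"
  show ?thesis
  proof (cases "m \<le> 2")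
    case True
    have "goodcol 3 m (\<lambda>_ _. 1)" unfolding goodcol_def edge_coloring_def
      using avoid_small[OF True] by auto
    then show ?thesis by blast
  next
    case False
    then have "m = 3 \<or> m = 4 \<or> m = 5 \<or> m = 6 \<or> m = 7" using m by auto
    then show ?thesis
    proof (elim disjE)
      assume "m = 3" then show ?thesis using goodcol_K3 unfolding goodcol_def
        using edge_coloring_def by (metis atLeastAtMost_iff le_SucI numeral_3_eq_3 numeral_2_eq_2)
    next
      assume "m = 4" then show ?thesis using goodcol_mat[of 3 4 M4] M4_ok three_cases by blast
    next
      assume "m = 5" then show ?thesis using goodcol_mat[of 3 5 M5] M5_ok three_cases by blast
    next
      assume "m = 6" then show ?thesis using goodcol_mat[of 3 6 M6] M6_ok three_cases by blast
    next
      assume "m = 7" then show ?thesis using goodcol_mat[of 3 7 M7] M7_ok three_cases by blast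
    qed
  qed
qed

lemma goodcol_mono: assumes "goodcol k m c" shows "goodcol (Suc k) m c"
proof -
  have "edge_coloring (Suc k) m c" unfolding edge_coloring_def
  proof (intro allI impI)
    fix u v assume h: "u < m \<and> v < m \<and> u \<noteq> v"
    then have "c u v = c v u \<and> c u v \<in> {1..k}" using assms unfolding goodcol_def edge_coloring_def by blast
    then show "c u v = c v u \<and> c u v \<in> {1..Suc k}" by auto
  qed
  then show ?thesis using assms unfolding goodcol_def by blast
qed

lemma step:
  assumes h: "\<forall>m \<le> F. \<exists>c. goodcol k m c"
  shows "\<forall>m \<le> 2 * F - 1. \<exists>c. goodcol (Suc k) m c"
proof (intro allI impI)
  fix m assume m: "m \<le> 2 * F - 1"
  show "\<exists>c. goodcol (Suc k) m c"
  proof (cases "m \<le> F")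
    case True then show ?thesis using h goodcol_mono by blast
  next
    case False
    define b where "b = m - F"
    have bF: "b \<le> F" "b \<noteq> F" "m = F + b" using m False b_def by auto
    obtain c1 where c1: "goodcol k F c1" using h by blast
    obtain c2 where c2: "goodcol k b c2" using h bF by blast
    have "goodcol (Suc k) (F + b) (comb k F c1 c2)"
      using c1 c2 comb_coloring comb_avoid bF(2) unfolding goodcol_def by metis
    then show ?thesis using bF(3) by auto
  qed
qed

lemma exist_all: "\<forall>m \<le> 3 * 2 ^ (i + 1) + 1. \<exists>c. goodcol (i + 3) m c"
proof (induction i)
  case 0 then show ?case using base3 by simp
next
  case (Suc i)
  have "2 * (3 * 2 ^ (i + 1) + 1) - 1 = (3 * 2 ^ (Suc i + 1) + 1::nat)" by simp
  then show ?case using step[OF Suc.IH] by simp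
qed

lemma exist_lower: "3 \<le> k \<Longrightarrow> \<exists>c. goodcol k (3 * 2 ^ (k - 2) + 1) c"
proof -
  assume k: "3 \<le> k"
  have "\<exists>c. goodcol ((k - 3) + 3) (3 * 2 ^ ((k - 3) + 1) + 1) c" using exist_all by blast
  moreover have e: "(k - 3) + 3 = k" "(k - 3) + 1 = k - 2" using k by auto
  ultimately show ?thesis unfolding e by blast
qed



lemma sum_swap_filter:
  assumes "finite A" "finite B"
  shows "(\<Sum>a\<in>A. \<Sum>b\<in>{b\<in>B. R a b}. f a b) = (\<Sum>b\<in>B. \<Sum>a\<in>{a\<in>A. R a b}. f a b)"
proof -
  have "(\<Sum>a\<in>A. \<Sum>b\<in>{b\<in>B. R a b}. f a b) = (\<Sum>a\<in>A. \<Sum>b\<in>B. if R a b then f a b else 0)"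
    using assms by (simp add: sum.inter_filter)
  also have "\<dots> = (\<Sum>b\<in>B. \<Sum>a\<in>A. if R a b then f a b else 0)" by (rule sum.swap)
  also have "\<dots> = (\<Sum>b\<in>B. \<Sum>a\<in>{a\<in>A. R a b}. f a b)"
    using assms by (simp add: sum.inter_filter)
  finally show ?thesis .
qed

lemma card_swap:
  assumes "finite A" "finite B"
  shows "(\<Sum>a\<in>A. card {b\<in>B. R a b}) = (\<Sum>b\<in>B. card {a\<in>A. R a b})"
  using sum_swap_filter[OF assms, where R=R and f="\<lambda>a b. 1::nat"] by simp

lemma amhm:
  fixes x :: "'a \<Rightarrow> real"
  assumes "finite G" "\<forall>h\<in>G. x h > 0" "(\<Sum>h\<in>G. 1 / x h) \<le> 1"
  shows "real (card G) ^ 2 \<le> (\<Sum>h\<in>G. x h)"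
proof -
  let ?g = "real (card G)"
  have t: "2 * ?g \<le> x h + ?g^2 / x h" if "h \<in> G" for h
  proof -
    have p: "x h > 0" using assms(2) that by blast
    have "0 \<le> (x h - ?g)^2 / x h" using p by simp
    also have "(x h - ?g)^2 / x h = x h + ?g^2 / x h - 2 * ?g"
      using p by (simp add: power2_eq_square field_simps)
    finally show ?thesis by simp
  qed
  have "(\<Sum>h\<in>G. 2 * ?g) \<le> (\<Sum>h\<in>G. x h + ?g^2 / x h)" using t by (rule sum_mono)
  also have "\<dots> = (\<Sum>h\<in>G. x h) + ?g^2 * (\<Sum>h\<in>G. 1 / x h)"
    by (simp add: sum.distrib sum_distrib_left)
  also have "\<dots> \<le> (\<Sum>h\<in>G. x h) + ?g^2"
    using assms(3) by (simp add: mult_left_le)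
  finally show ?thesis by (simp add: power2_eq_square)
qed

locale av1 =
  fixes n :: nat and c :: "nat \<Rightarrow> nat \<Rightarrow> nat" and j :: nat
  assumes sym: "\<forall>u v. u < n \<and> v < n \<and> u \<noteq> v \<longrightarrow> c u v = c v u"
    and avd: "avoid n c j"
begin

abbreviation adj where "adj u v \<equiv> col_edge n c j u v"
abbreviation d where "d v \<equiv> col_deg n c j v"
definition N where "N v = {u. adj v u}"

lemma adj_sym: "adj u v \<Longrightarrow> adj v u"
  using sym unfolding col_edge_def by auto

lemma adj_lt: "adj u v \<Longrightarrow> u < n \<and> v < n \<and> u \<noteq> v"
  unfolding col_edge_def by auto

lemma N_sub: "N v \<subseteq> {..<n}" unfolding N_def col_edge_def by auto
lemma N_fin: "finite (N v)" using N_sub finite_subset by blast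
lemma d_N: "d v = card (N v)" unfolding N_def col_deg_def ..

lemma d_pos: "adj u v \<Longrightarrow> 1 \<le> d u"
proof -
  assume "adj u v"
  then have "v \<in> N u" by (simp add: N_def)
  then show ?thesis using N_fin d_N card_0_eq by (metis empty_iff less_one not_le)
qed

lemma notri: "\<not> tri n c j u v w" using avd unfolding avoid_def by blast

lemma eq1:
  assumes "adj u v" "d u = d v"
  shows "d u = 1"
proof (rule ccontr)
  assume "d u \<noteq> 1"
  with d_pos[OF assms(1)] have "2 \<le> card (N u)" using d_N by simp
  have "N u - {v} \<noteq> {}"
  proof
    assume "N u - {v} = {}"
    then have "N u \<subseteq> {v}" by blast
    then have "card (N u) \<le> 1" using card_mono[of "{v}" "N u"] by simp
    with \<open>2 \<le> card (N u)\<close> show False by simp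
  qed
  then obtain w where w: "w \<in> N u" "w \<noteq> v" by blast
  then have uw: "adj u w" by (simp add: N_def)
  show False
  proof (cases "d w \<le> d u")
    case True
    then have "tri n c j w u v" using adj_sym[OF uw] assms w(2) by (simp add: tri_def)
    then show False using notri by blast
  next
    case False
    then have "tri n c j v u w" using adj_sym[OF assms(1)] uw assms w(2) by (simp add: tri_def)
    then show False using notri by blast
  qed
qed

lemma lt_low:
  assumes "adj u v" "d u < d v" "adj u w"
  shows "d u < d w"
proof (rule ccontr)
  assume "\<not> d u < d w"
  then have "tri n c j w u v" using adj_sym[OF assms(3)] assms by (auto simp: tri_def)
  then show False using notri by blast
qed

lemma lt_high:
  assumes "adj u v" "d u < d v" "adj v w"
  shows "d w < d v"
proof (rule ccontr)
  assume "\<not> d w < d v"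
  then have "tri n c j u v w" using assms by (auto simp: tri_def)
  then show False using notri by blast
qed

lemma deg1_unique:
  assumes "d u = 1" "adj u v" "adj u w"
  shows "v = w"
proof -
  have "card (N u) = 1" using assms d_N by simp
  then obtain z where "N u = {z}" by (rule card_1_singletonE)
  moreover have "v \<in> N u" "w \<in> N u" using assms(2,3) by (auto simp: N_def)
  ultimately show ?thesis by simp
qed

definition H where "H = {v. \<exists>u. adj v u \<and> (d u < d v \<or> (d u = d v \<and> u < v))}"

lemma H_sub: "H \<subseteq> {..<n}" unfolding H_def using adj_lt by auto

lemma bip:
  assumes "adj u v"
  shows "u \<in> H \<longleftrightarrow> v \<notin> H"
proof (cases "d u = d v")
  case True
  have du: "d u = 1" using eq1[OF assms True] .
  have dv: "d v = 1" using du True by simp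
  have nu: "\<And>x. adj u x \<Longrightarrow> x = v" using deg1_unique[OF du] assms by blast
  have nv: "\<And>x. adj v x \<Longrightarrow> x = u" using deg1_unique[OF dv] adj_sym[OF assms] by blast
  have "u \<in> H \<longleftrightarrow> v < u"
  proof
    assume "u \<in> H"
    then obtain x where x: "adj u x" "d x < d u \<or> (d x = d u \<and> x < u)" unfolding H_def by blast
    have "x = v" using nu[OF x(1)] .
    then show "v < u" using x(2) True by simp
  next
    assume "v < u" then show "u \<in> H" unfolding H_def using assms True by force
  qed
  moreover have "v \<in> H \<longleftrightarrow> u < v"
  proof
    assume "v \<in> H"
    then obtain x where x: "adj v x" "d x < d v \<or> (d x = d v \<and> x < v)" unfolding H_def by blast
    have "x = u" using nv[OF x(1)] .
    then show "u < v" using x(2) True by simp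
  next
    assume "u < v" then show "v \<in> H" unfolding H_def using adj_sym[OF assms] True by force
  qed
  moreover have "u \<noteq> v" using adj_lt[OF assms] by simp
  ultimately show ?thesis by auto
next
  case False
  show ?thesis
  proof (cases "d u < d v")
    case True
    have "v \<in> H" unfolding H_def using adj_sym[OF assms] True by blast
    moreover have "u \<notin> H"
    proof
      assume "u \<in> H"
      then obtain w where w: "adj u w" "d w < d u \<or> (d w = d u \<and> w < u)" unfolding H_def by blast
      have "d u < d w" using lt_low[OF assms True w(1)] .
      then show False using w(2) by auto
    qed
    ultimately show ?thesis by blast
  next
    case F2: False
    then have T: "d v < d u" using False by simp
    have "u \<in> H" unfolding H_def using assms T by blast
    moreover have "v \<notin> H"
    proof
      assume "v \<in> H"
      then obtain w where w: "adj v w" "d w < d v \<or> (d w = d v \<and> w < v)" unfolding H_def by blast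
      have "d v < d w" using lt_low[OF adj_sym[OF assms] T w(1)] .
      then show False using w(2) by auto
    qed
    ultimately show ?thesis by blast
  qed
qed

lemma H_deg:
  assumes "h \<in> H" "adj h l"
  shows "d l < d h \<or> (d l = 1 \<and> d h = 1)"
proof -
  have lH: "l \<notin> H" using bip[OF assms(2)] assms(1) by blast
  show ?thesis
  proof (cases "d h < d l")
    case True
    then have "l \<in> H" unfolding H_def using adj_sym[OF assms(2)] by blast
    then show ?thesis using lH by blast
  next
    case False
    show ?thesis
    proof (cases "d l = d h")
      case True then show ?thesis using eq1[OF assms(2)] by simp
    next
      case False then show ?thesis using \<open>\<not> d h < d l\<close> by simp
    qed
  qed
qed

lemma H_pos: "h \<in> H \<Longrightarrow> 1 \<le> d h"
  unfolding H_def using d_pos by blast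


definition V where "V = {..<n}"
definition L where "L = V - H"
definition L1 where "L1 = {x\<in>L. 1 \<le> d x}"
definition iso where "iso = {x\<in>V. d x = 0}"
definition G where "G = {h\<in>H. 2 \<le> d h}"
definition H1 where "H1 = {h\<in>H. d h = 1}"
definition K2 where "K2 x \<longleftrightarrow> d x \<le> 1 \<and> (\<forall>u. adj x u \<longrightarrow> d u \<le> 1)"
definition Bs where "Bs = {x\<in>V. \<not> K2 x}"

lemma finV: "finite V" by (simp add: V_def)
lemma finH: "finite H" using H_sub finite_subset by blast
lemma HV: "H \<subseteq> V" using H_sub by (simp add: V_def)
lemma finL: "finite L" by (simp add: L_def finV)
lemma finL1: "finite L1" by (simp add: L1_def finL)
lemma finG: "finite G" by (simp add: G_def finH)
lemma finH1: "finite H1" by (simp add: H1_def finH)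
lemma fin_iso: "finite iso" by (simp add: iso_def finV)
lemma NV: "N v \<subseteq> V" using N_sub by (simp add: V_def)
lemma adjV: "adj u v \<Longrightarrow> u \<in> V \<and> v \<in> V" using adj_lt by (simp add: V_def)

lemma N_L: "l \<in> L \<Longrightarrow> N l \<subseteq> H"
  unfolding N_def L_def using bip by blast

lemma N_H: "h \<in> H \<Longrightarrow> N h \<subseteq> L"
  unfolding N_def L_def using bip adjV by blast

lemma iso_noadj: "x \<in> iso \<Longrightarrow> \<not> adj x u"
  using d_pos unfolding iso_def by fastforce

lemma card_V: "card V = card H + card L1 + card iso"
proof -
  have "V = H \<union> (L1 \<union> iso)" unfolding L1_def iso_def L_def using HV by auto
  moreover have "H \<inter> (L1 \<union> iso) = {}" unfolding L1_def iso_def L_def using H_pos by fastforce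
  moreover have "L1 \<inter> iso = {}" unfolding L1_def iso_def by auto
  ultimately show ?thesis using finH finL1 fin_iso by (simp add: card_Un_disjoint)
qed

lemma P1: "(\<Sum>h\<in>H. \<Sum>l\<in>N h. 1 / real (d h)) = real (card H)"
proof -
  have inner: "\<And>h. h \<in> H \<Longrightarrow> (\<Sum>l\<in>N h. 1 / real (d h)) = 1"
  proof -
    fix h assume "h \<in> H"
    then have "1 \<le> d h" by (rule H_pos)
    then show "(\<Sum>l\<in>N h. 1 / real (d h)) = 1" using d_N[of h, symmetric] by simp
  qed
  have "(\<Sum>h\<in>H. \<Sum>l\<in>N h. 1 / real (d h)) = (\<Sum>h\<in>H. (1::real))"
    by (rule sum.cong[OF refl]) (rule inner)
  then show ?thesis by simp
qed

lemma NH_eq: "h \<in> H \<Longrightarrow> N h = {l\<in>V. adj h l}"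
  unfolding N_def using adjV by auto

lemma P2: "(\<Sum>h\<in>H. \<Sum>l\<in>N h. 1 / real (d l)) = real (card L1)"
proof -
  have "(\<Sum>h\<in>H. \<Sum>l\<in>N h. 1 / real (d l)) = (\<Sum>h\<in>H. \<Sum>l\<in>{l\<in>V. adj h l}. 1 / real (d l))"
    using NH_eq by simp
  also have "\<dots> = (\<Sum>l\<in>V. \<Sum>h\<in>{h\<in>H. adj h l}. 1 / real (d l))"
    by (rule sum_swap_filter[OF finH finV])
  also have "\<dots> = (\<Sum>l\<in>V. if l \<in> L1 then 1 else 0)"
  proof (rule sum.cong[OF refl])
    fix l assume lV: "l \<in> V"
    show "(\<Sum>h\<in>{h\<in>H. adj h l}. 1 / real (d l)) = (if l \<in> L1 then 1 else 0)"
    proof (cases "l \<in> L1")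
      case True
      then have lL: "l \<in> L" and dl: "1 \<le> d l" unfolding L1_def by auto
      have "{h\<in>H. adj h l} = N l" using N_L[OF lL] adj_sym unfolding N_def by blast
      then show ?thesis using True dl d_N[of l] by simp
    next
      case False
      have e: "{h\<in>H. adj h l} = {}"
      proof (cases "l \<in> H")
        case True then show ?thesis using bip adj_sym by blast
      next
        case nH: False
        then have "l \<in> iso" using False lV unfolding L1_def iso_def L_def by auto
        then show ?thesis using iso_noadj adj_sym by blast
      qed
      show ?thesis unfolding e using False by simp
    qed
  qed
  also have "\<dots> = real (card L1)"
  proof -
    have "L1 \<subseteq> V" unfolding L1_def L_def by auto
    then have "{l\<in>V. l \<in> L1} = L1" by auto
    then show ?thesis using finV \<open>L1 \<subseteq> V\<close> by (simp add: sum.If_cases Int_absorb1)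
  qed
  finally show ?thesis .
qed

lemma term_nonneg:
  assumes "h \<in> H" "l \<in> N h"
  shows "0 \<le> 1 / real (d l) - 1 / real (d h)"
proof -
  have a: "adj h l" using assms(2) by (simp add: N_def)
  have "d l \<le> d h" using H_deg[OF assms(1) a] by auto
  moreover have "1 \<le> d l" using d_pos[OF adj_sym[OF a]] .
  ultimately show ?thesis by (simp add: frac_le)
qed

lemma slack: "real (card L1) - real (card H) = (\<Sum>h\<in>H. \<Sum>l\<in>N h. 1 / real (d l) - 1 / real (d h))"
  using P1 P2 by (simp add: sum_subtractf)

lemma S2: "card H \<le> card L1"
proof -
  have "0 \<le> (\<Sum>h\<in>H. \<Sum>l\<in>N h. 1 / real (d l) - 1 / real (d h))"
    using term_nonneg by (intro sum_nonneg) auto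
  then show ?thesis using slack by simp
qed

lemma inner_G:
  assumes "h \<in> G"
  shows "1 / (real (d h) - 1) \<le> (\<Sum>l\<in>N h. 1 / real (d l) - 1 / real (d h))"
proof -
  have hH: "h \<in> H" and d2: "2 \<le> d h" using assms by (auto simp: G_def)
  have "\<And>l. l \<in> N h \<Longrightarrow> 1 / (real (d h) - 1) - 1 / real (d h) \<le> 1 / real (d l) - 1 / real (d h)"
  proof -
    fix l assume l: "l \<in> N h"
    have a: "adj h l" using l by (simp add: N_def)
    have "d l < d h" using H_deg[OF hH a] d2 by auto
    then have r: "real (d l) \<le> real (d h) - 1" by linarith
    have "1 \<le> d l" using d_pos[OF adj_sym[OF a]] .
    then have "1 / (real (d h) - 1) \<le> 1 / real (d l)" using r by (simp add: frac_le)
    then show "1 / (real (d h) - 1) - 1 / real (d h) \<le> 1 / real (d l) - 1 / real (d h)" by simp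
  qed
  then have "(\<Sum>l\<in>N h. 1 / (real (d h) - 1) - 1 / real (d h)) \<le> (\<Sum>l\<in>N h. 1 / real (d l) - 1 / real (d h))"
    by (rule sum_mono)
  moreover have "(\<Sum>l\<in>N h. 1 / (real (d h) - 1) - 1 / real (d h)) = 1 / (real (d h) - 1)"
  proof -
    have "(\<Sum>l\<in>N h. 1 / (real (d h) - 1) - 1 / real (d h)) = real (d h) * (1 / (real (d h) - 1) - 1 / real (d h))"
      using d_N[of h] by simp
    also have "\<dots> = 1 / (real (d h) - 1)"
    proof -
      have "real (d h) \<ge> 2" using d2 by simp
      then show ?thesis by (simp add: field_simps)
    qed
    finally show ?thesis .
  qed
  ultimately show ?thesis by simp
qed

lemma GH: "G \<subseteq> H" unfolding G_def by auto

lemma S3: "(\<Sum>h\<in>G. 1 / (real (d h) - 1)) \<le> real (card L1) - real (card H)"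
proof -
  have "(\<Sum>h\<in>G. 1 / (real (d h) - 1)) \<le> (\<Sum>h\<in>G. \<Sum>l\<in>N h. 1 / real (d l) - 1 / real (d h))"
    using inner_G by (rule sum_mono)
  also have "\<dots> \<le> (\<Sum>h\<in>H. \<Sum>l\<in>N h. 1 / real (d l) - 1 / real (d h))"
    using term_nonneg by (intro sum_mono2[OF finH GH] sum_nonneg) auto
  finally show ?thesis using slack by simp
qed

lemma E1: "(\<Sum>x\<in>V. d x) = 2 * (\<Sum>h\<in>H. d h)"
proof -
  have VHL: "V = H \<union> L" "H \<inter> L = {}" unfolding L_def using HV by auto
  have "(\<Sum>l\<in>L. d l) = (\<Sum>l\<in>L. card {h\<in>H. adj l h})"
  proof (rule sum.cong[OF refl])
    fix l assume "l \<in> L"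
    then have "N l = {h\<in>H. adj l h}" using N_L unfolding N_def by blast
    then show "d l = card {h\<in>H. adj l h}" using d_N by simp
  qed
  also have "\<dots> = (\<Sum>h\<in>H. card {l\<in>L. adj l h})" by (rule card_swap[OF finL finH])
  also have "\<dots> = (\<Sum>h\<in>H. d h)"
  proof (rule sum.cong[OF refl])
    fix h assume "h \<in> H"
    then have "N h = {l\<in>L. adj l h}" using N_H adj_sym unfolding N_def by blast
    then show "card {l\<in>L. adj l h} = d h" using d_N by simp
  qed
  finally have "(\<Sum>l\<in>L. d l) = (\<Sum>h\<in>H. d h)" .
  moreover have "(\<Sum>x\<in>V. d x) = (\<Sum>h\<in>H. d h) + (\<Sum>l\<in>L. d l)"
    using VHL finH finL by (simp add: sum.union_disjoint)
  ultimately show ?thesis by simp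
qed

lemma E2: "(\<Sum>h\<in>H. d h) = card H1 + (\<Sum>h\<in>G. d h)" "card H = card H1 + card G"
proof -
  have u: "H = H1 \<union> G" "H1 \<inter> G = {}" unfolding H1_def G_def using H_pos by fastforce+
  have "(\<Sum>h\<in>H1. d h) = card H1" unfolding H1_def by simp
  then show "(\<Sum>h\<in>H. d h) = card H1 + (\<Sum>h\<in>G. d h)" using u finH1 finG by (simp add: sum.union_disjoint)
  show "card H = card H1 + card G" using u finH1 finG by (simp add: card_Un_disjoint)
qed

lemma AM:
  assumes "card L1 \<le> card H + 1"
  shows "card H + (card G)^2 \<le> (\<Sum>h\<in>H. d h)"
proof -
  have pos: "\<forall>h\<in>G. real (d h) - 1 > 0" unfolding G_def by auto
  have "(\<Sum>h\<in>G. 1 / (real (d h) - 1)) \<le> 1" using S3 assms by linarith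
  then have "real (card G) ^ 2 \<le> (\<Sum>h\<in>G. real (d h) - 1)" using amhm[OF finG pos] by blast
  also have "\<dots> = real (\<Sum>h\<in>G. d h) - real (card G)" by (simp add: sum_subtractf)
  finally have "real ((card G)^2 + card G) \<le> real (\<Sum>h\<in>G. d h)" by simp
  then have "(card G)^2 + card G \<le> (\<Sum>h\<in>G. d h)" by (simp only: of_nat_le_iff)
  then show ?thesis using E2 by simp
qed

lemma Z:
  assumes "card L1 = card H"
  shows "G = {}"
proof (rule ccontr)
  assume ne: "G \<noteq> {}"
  have "0 < (\<Sum>h\<in>G. 1 / (real (d h) - 1))"
    using ne finG unfolding G_def by (intro sum_pos) auto
  then show False using S3 assms by simp
qed


lemma le1_unique:
  assumes "d x \<le> 1" "adj x y" "adj x z"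
  shows "y = z"
proof -
  have "d x = 1" using assms(1) d_pos[OF assms(2)] by simp
  then show ?thesis using deg1_unique assms(2,3) by blast
qed

lemma H_K2: "h \<in> H \<Longrightarrow> d h \<le> 1 \<Longrightarrow> K2 h"
  unfolding K2_def using H_deg by fastforce

lemma iso_K2: "x \<in> iso \<Longrightarrow> K2 x"
  unfolding K2_def using iso_noadj unfolding iso_def by auto

definition K2L where "K2L = {l\<in>L1. K2 l}"

lemma Bs_sub: "Bs \<subseteq> G \<union> (L1 - K2L)"
proof
  fix x assume x: "x \<in> Bs"
  then have xV: "x \<in> V" and nk: "\<not> K2 x" unfolding Bs_def by auto
  show "x \<in> G \<union> (L1 - K2L)"
  proof (cases "x \<in> H")
    case True
    then have "\<not> d x \<le> 1" using H_K2 nk by blast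
    then show ?thesis using True unfolding G_def by auto
  next
    case False
    then have "x \<in> L" using xV by (simp add: L_def)
    moreover have "x \<notin> iso" using iso_K2 nk by blast
    ultimately have "x \<in> L1" using xV unfolding L1_def iso_def by auto
    then show ?thesis using nk unfolding K2L_def by auto
  qed
qed

lemma H1_K2L: "card H1 \<le> card K2L"
proof -
  define f where "f l = (SOME h. adj l h)" for l
  have "H1 \<subseteq> f ` K2L"
  proof
    fix h assume h: "h \<in> H1"
    then have hH: "h \<in> H" and dh: "d h = 1" unfolding H1_def by auto
    then have "N h \<noteq> {}" using d_N[of h] by auto
    then obtain l where l: "adj h l" unfolding N_def by auto
    have la: "adj l h" using adj_sym[OF l] .
    have lL: "l \<in> L" using N_H[OF hH] l unfolding N_def by blast
    have dl: "d l = 1" using H_deg[OF hH l] d_pos[OF la] dh by auto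
    have uniq: "\<And>x. adj l x \<Longrightarrow> x = h" using deg1_unique[OF dl la] by blast
    have "K2 l" unfolding K2_def using dl uniq dh by auto
    then have "l \<in> K2L" using lL dl unfolding K2L_def L1_def by auto
    moreover have "f l = h"
    proof -
      have "adj l (f l)" unfolding f_def using la by (rule someI)
      then show ?thesis using uniq by blast
    qed
    ultimately show "h \<in> f ` K2L" by blast
  qed
  moreover have "finite K2L" unfolding K2L_def using finL1 by simp
  ultimately show ?thesis using card_image_le card_mono finite_imageI le_trans by metis
qed

lemma BS:
  assumes "card L1 \<le> card H + 1"
  shows "card Bs \<le> 2 * card G + 1"
proof -
  have fK: "finite K2L" "K2L \<subseteq> L1" unfolding K2L_def using finL1 by auto
  have "card Bs \<le> card (G \<union> (L1 - K2L))"
    using Bs_sub finG finL1 by (intro card_mono) auto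
  also have "\<dots> \<le> card G + card (L1 - K2L)" by (rule card_Un_le)
  also have "card (L1 - K2L) = card L1 - card K2L" using fK by (simp add: card_Diff_subset)
  finally have "card Bs \<le> card G + (card L1 - card K2L)" .
  moreover have "card K2L \<le> card L1" using fK finL1 by (simp add: card_mono)
  ultimately show ?thesis using H1_K2L E2(2) assms by linarith
qed

lemma Bs_count: "card Bs = card V - card {x\<in>V. K2 x}"
proof -
  have "Bs = V - {x\<in>V. K2 x}" unfolding Bs_def by auto
  then show ?thesis using finV by (simp add: card_Diff_subset)
qed

end



lemma pow_sum_card:
  assumes "finite A"
  shows "2 * (\<Sum>S\<in>Pow A. card S) = card A * 2 ^ card A"
  using assms
proof (induction A rule: finite_induct)
  case empty then show ?case by simp
next
  case (insert a A)
  have fP: "finite (Pow A)" using insert.hyps by simp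
  have disj: "Pow A \<inter> insert a ` Pow A = {}" using insert.hyps by auto
  have inj: "inj_on (insert a) (Pow A)"
  proof (rule inj_onI)
    fix x y assume "x \<in> Pow A" "y \<in> Pow A" "insert a x = insert a y"
    then have "a \<notin> x" "a \<notin> y" using insert.hyps by auto
    then show "x = y" using \<open>insert a x = insert a y\<close> by (metis Diff_insert_absorb)
  qed
  have "(\<Sum>S\<in>insert a ` Pow A. card S) = (\<Sum>S\<in>Pow A. card (insert a S))"
    using sum.reindex[OF inj] by simp
  also have "\<dots> = (\<Sum>S\<in>Pow A. card S + 1)"
  proof (rule sum.cong[OF refl])
    fix S assume "S \<in> Pow A"
    then have "a \<notin> S" "finite S" using insert.hyps finite_subset by auto
    then show "card (insert a S) = card S + 1" by simp
  qed
  also have "\<dots> = (\<Sum>S\<in>Pow A. card S) + (\<Sum>S\<in>Pow A. 1)" by (rule sum.distrib)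
  also have "\<dots> = (\<Sum>S\<in>Pow A. card S) + 2 ^ card A"
    using insert.hyps by (simp add: card_Pow)
  finally have e: "(\<Sum>S\<in>insert a ` Pow A. card S) = (\<Sum>S\<in>Pow A. card S) + 2 ^ card A" .
  have "(\<Sum>S\<in>Pow (insert a A). card S) = (\<Sum>S\<in>Pow A. card S) + (\<Sum>S\<in>insert a ` Pow A. card S)"
    unfolding Pow_insert using fP disj by (simp add: sum.union_disjoint)
  then have "2 * (\<Sum>S\<in>Pow (insert a A). card S) = 2 * (2 * (\<Sum>S\<in>Pow A. card S)) + 2 * 2 ^ card A"
    using e by simp
  also have "\<dots> = 2 * (card A * 2 ^ card A) + 2 * 2 ^ card A" using insert.IH by simp
  also have "\<dots> = card (insert a A) * 2 ^ card (insert a A)" using insert.hyps by simp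
  finally show ?case .
qed

lemma cauchy:
  fixes f :: "'a \<Rightarrow> nat"
  assumes "finite A"
  shows "(\<Sum>x\<in>A. f x) * (\<Sum>x\<in>A. f x) \<le> card A * (\<Sum>x\<in>A. f x * f x)"
proof (cases "A = {}")
  case True then show ?thesis by simp
next
  case False
  then have kp: "card A > 0" using assms by (simp add: card_gt_0_iff)
  define S where "S = real (\<Sum>x\<in>A. f x)"
  define k where "k = real (card A)"
  define a where "a = S / k"
  have k0: "k > 0" using kp by (simp add: k_def)
  have "0 \<le> (\<Sum>x\<in>A. (real (f x) - a)^2)" by (simp add: sum_nonneg)
  also have "\<dots> = (\<Sum>x\<in>A. real (f x * f x)) - 2 * a * S + k * a^2"
    by (simp add: power2_eq_square algebra_simps sum.distrib sum_subtractf sum_distrib_left S_def k_def)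
  also have "\<dots> = (\<Sum>x\<in>A. real (f x * f x)) - S * S / k"
    using k0 by (simp add: a_def power2_eq_square field_simps)
  finally have "S * S \<le> k * (\<Sum>x\<in>A. real (f x * f x))" using k0 by (simp add: field_simps)
  then have "real ((\<Sum>x\<in>A. f x) * (\<Sum>x\<in>A. f x)) \<le> real (card A * (\<Sum>x\<in>A. f x * f x))"
    by (simp add: S_def k_def)
  then show ?thesis by (simp only: of_nat_le_iff)
qed

lemma tri_pow: "k * (k + 1) + 2 \<le> 2 ^ (k + 1)"
proof (induction k)
  case 0 then show ?case by simp
next
  case (Suc k)
  have "Suc k \<le> 2 ^ k" by (induction k) auto
  then show ?case using Suc.IH by simp
qed

lemma final_arith:
  fixes k n C G Q :: nat
  assumes k4: "4 \<le> k" and nk: "n = 2 ^ k - 1" and C: "2 * C = k * (k - 1)"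
    and cs: "G * G \<le> k * Q" and ed: "2 * Q + k * (n - 1) \<le> n * (n - 1)"
    and bs: "k * n \<le> 2 * G + k + n + C"
  shows False
proof -
  have ed': "2 * Q \<le> (n - 1) * (n - k)"
  proof -
    have "n * (n - 1) = k * (n - 1) + (n - 1) * (n - k)"
    proof -
      have "k < 2 ^ k" by (rule less_exp)
      then have "k \<le> n" using nk by linarith
      then have e: "k + (n - k) = n" by simp
      have "n * (n - 1) = (n - 1) * (k + (n - k))" by (simp add: e mult.commute)
      also have "\<dots> = k * (n - 1) + (n - 1) * (n - k)" by (simp add: add_mult_distrib2 mult.commute)
      finally show ?thesis .
    qed
    then show ?thesis using ed by simp
  qed
  have q: "2 * (G * G) \<le> k * ((n - 1) * (n - k))"
  proof -
    have "2 * (G * G) \<le> k * (2 * Q)" using cs by simp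
    also have "\<dots> \<le> k * ((n - 1) * (n - k))" using ed' by simp
    finally show ?thesis .
  qed
  show False
  proof (cases "k = 4")
    case True
    then have n: "n = 15" "C = 6" using nk C by auto
    then have "35 \<le> 2 * G" using bs True by simp
    then have "18 \<le> G" by simp
    then have "324 \<le> G * G" using mult_le_mono[of 18 G 18 G] by simp
    moreover have "2 * (G * G) \<le> 616" using q True n by simp
    ultimately show False by simp
  next
    case F4: False
    show False
    proof (cases "k = 5")
      case True
      then have n: "n = 31" "C = 10" using nk C by auto
      then have "109 \<le> 2 * G" using bs True by simp
      then have "55 \<le> G" by simp
      then have "3025 \<le> G * G" using mult_le_mono[of 55 G 55 G] by simp
      moreover have "2 * (G * G) \<le> 3900" using q True n by simp
      ultimately show False by simp
    next
      case False
      then have k6: "6 \<le> k" using F4 k4 by simp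
      have a: "k * (k + 1) + 2 \<le> 2 * 2 ^ k" using tri_pow[of k] by simp
      have b: "k * (k + 1) = k * (k - 1) + 2 * k" using k6 by (cases k) auto
      have "k * (k - 1) + 2 * k + 2 \<le> 2 * 2 ^ k" using a unfolding b .
      then have "2 * C + 2 * k + 2 \<le> 2 * 2 ^ k" unfolding C .
      then have "2 * (k + C) + 2 \<le> 2 * 2 ^ k" by simp
      then have kc: "k + C \<le> n" using nk by arith
      have h1: "(k - 2) * n \<le> 2 * G"
      proof -
        have "(k - 2) * n + k + C + n \<le> k * n"
        proof -
          have "k * n = (k - 2) * n + 2 * n" using k6 by (simp add: diff_mult_distrib add_mult_distrib[symmetric])
          then show ?thesis using kc by simp
        qed
        then show ?thesis using bs by simp
      qed
      have h2: "((k - 2) * n) * ((k - 2) * n) \<le> (2 * G) * (2 * G)" using h1 mult_le_mono by blast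
      have h3: "(2 * G) * (2 * G) \<le> 2 * k * ((n - 1) * (n - k))"
      proof -
        have "(2 * G) * (2 * G) = 2 * (2 * (G * G))" by simp
        also have "\<dots> \<le> 2 * (k * ((n - 1) * (n - k)))" using q by (rule mult_le_mono2)
        also have "\<dots> = 2 * k * ((n - 1) * (n - k))" by (simp only: mult.assoc)
        finally show ?thesis .
      qed
      have n1: "1 \<le> n" using kc k6 by simp
      have h4: "(n - 1) * (n - k) < n * n"
      proof -
        have "(n - 1) * (n - k) \<le> (n - 1) * n" by simp
        also have "\<dots> < n * n" using n1 by simp
        finally show ?thesis .
      qed
      have h4': "2 * k * ((n - 1) * (n - k)) < 2 * k * (n * n)" using h4 k6 by simp
      have kk: "2 * k \<le> (k - 2) * (k - 2)"
      proof -
        obtain m where m: "k = m + 6" using k6 by (metis add.commute le_Suc_ex)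
        show ?thesis unfolding m by (simp add: algebra_simps)
      qed
      have h5: "2 * k * (n * n) \<le> (k - 2) * (k - 2) * (n * n)" using kk by simp
      have "((k - 2) * n) * ((k - 2) * n) = (k - 2) * (k - 2) * (n * n)" by (simp add: algebra_simps)
      then show False using h2 h3 h4' h5 by linarith
    qed
  qed
qed



definition sd :: "'a set \<Rightarrow> 'a set \<Rightarrow> 'a set" where "sd A B = (A - B) \<union> (B - A)"

locale av =
  fixes n k :: nat and c :: "nat \<Rightarrow> nat \<Rightarrow> nat"
  assumes col: "edge_coloring k n c"
    and avk: "\<forall>j\<in>{1..k}. avoid n c j"
begin

lemma av1: "j \<in> {1..k} \<Longrightarrow> av1 n c j"
  using col avk unfolding av1_def edge_coloring_def by blast

abbreviation HH where "HH j \<equiv> av1.H n c j"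

definition sv where "sv x = {j\<in>{1..k}. x \<in> HH j}"

definition VV where "VV = {..<n}"

lemma sv_sub: "sv x \<subseteq> {1..k}" unfolding sv_def by auto

lemma col_in: "u < n \<Longrightarrow> v < n \<Longrightarrow> u \<noteq> v \<Longrightarrow> c u v \<in> {1..k}"
  using col unfolding edge_coloring_def by blast

lemma diffcol:
  assumes "u < n" "v < n" "u \<noteq> v"
  shows "c u v \<in> {1..k} \<and> (c u v \<in> sv u \<longleftrightarrow> c u v \<notin> sv v)"
proof -
  let ?j = "c u v"
  have j: "?j \<in> {1..k}" using col_in assms by blast
  have e: "col_edge n c ?j u v" using assms by (simp add: col_edge_def)
  have "u \<in> HH ?j \<longleftrightarrow> v \<notin> HH ?j" using av1.bip[OF av1[OF j] e] .
  then show ?thesis using j unfolding sv_def by auto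
qed

lemma inj_sv: "inj_on sv VV"
proof (rule inj_onI)
  fix u v assume "u \<in> VV" "v \<in> VV" "sv u = sv v"
  then show "u = v" using diffcol[of u v] unfolding VV_def by auto
qed

lemma card_img: "card (sv ` VV) = n"
  using inj_sv card_image unfolding VV_def by fastforce

lemma img_sub: "sv ` VV \<subseteq> Pow {1..k}" using sv_sub by auto

lemma n_le: "n \<le> 2 ^ k"
proof -
  have "card (sv ` VV) \<le> card (Pow {1..k})" using img_sub by (intro card_mono) auto
  then show ?thesis using card_img by (simp add: card_Pow)
qed

lemma sumH: "(\<Sum>j\<in>{1..k}. card (HH j)) = (\<Sum>S\<in>sv ` VV. card S)"
proof -
  have "(\<Sum>j\<in>{1..k}. card (HH j)) = (\<Sum>j\<in>{1..k}. card {x\<in>VV. x \<in> HH j})"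
  proof (rule sum.cong[OF refl])
    fix j assume j: "j \<in> {1..k}"
    have "HH j \<subseteq> VV" using av1.H_sub[OF av1[OF j]] by (simp add: VV_def)
    then have "{x\<in>VV. x \<in> HH j} = HH j" by auto
    then show "card (HH j) = card {x\<in>VV. x \<in> HH j}" by simp
  qed
  also have "\<dots> = (\<Sum>x\<in>VV. card {j\<in>{1..k}. x \<in> HH j})"
    by (rule card_swap) (auto simp: VV_def)
  also have "\<dots> = (\<Sum>x\<in>VV. card (sv x))" by (simp add: sv_def)
  also have "\<dots> = (\<Sum>S\<in>sv ` VV. card S)" using sum.reindex[OF inj_sv, of card] by simp
  finally show ?thesis .
qed

lemma degsum_x:
  assumes "x < n"
  shows "(\<Sum>j\<in>{1..k}. col_deg n c j x) = n - 1"
proof -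
  have "(\<Sum>j\<in>{1..k}. col_deg n c j x) = (\<Sum>j\<in>{1..k}. card {u\<in>VV - {x}. c x u = j})"
  proof (rule sum.cong[OF refl])
    fix j
    have "{u. col_edge n c j x u} = {u\<in>VV - {x}. c x u = j}"
      using assms unfolding col_edge_def VV_def by auto
    then show "col_deg n c j x = card {u\<in>VV - {x}. c x u = j}" by (simp add: col_deg_def)
  qed
  also have "\<dots> = (\<Sum>u\<in>VV - {x}. card {j\<in>{1..k}. c x u = j})"
    by (rule card_swap) (auto simp: VV_def)
  also have "\<dots> = (\<Sum>u\<in>VV - {x}. 1)"
  proof (rule sum.cong[OF refl])
    fix u assume "u \<in> VV - {x}"
    then have "c x u \<in> {1..k}" using col_in assms unfolding VV_def by auto
    then have "{j\<in>{1..k}. c x u = j} = {c x u}" by auto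
    then show "card {j\<in>{1..k}. c x u = j} = 1" by simp
  qed
  also have "\<dots> = n - 1" using assms by (simp add: VV_def)
  finally show ?thesis .
qed

lemma degsum: "2 * (\<Sum>j\<in>{1..k}. \<Sum>h\<in>HH j. col_deg n c j h) = n * (n - 1)"
proof -
  have "2 * (\<Sum>j\<in>{1..k}. \<Sum>h\<in>HH j. col_deg n c j h) = (\<Sum>j\<in>{1..k}. 2 * (\<Sum>h\<in>HH j. col_deg n c j h))"
    by (simp add: sum_distrib_left)
  also have "\<dots> = (\<Sum>j\<in>{1..k}. \<Sum>x\<in>VV. col_deg n c j x)"
  proof (rule sum.cong[OF refl])
    fix j assume j: "j \<in> {1..k}"
    show "2 * (\<Sum>h\<in>HH j. col_deg n c j h) = (\<Sum>x\<in>VV. col_deg n c j x)"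
      using av1.E1[OF av1[OF j]] unfolding av1.V_def[OF av1[OF j]] VV_def by simp
  qed
  also have "\<dots> = (\<Sum>x\<in>VV. \<Sum>j\<in>{1..k}. col_deg n c j x)" by (rule sum.swap)
  also have "\<dots> = (\<Sum>x\<in>VV. n - 1)" using degsum_x by (simp add: VV_def)
  also have "\<dots> = n * (n - 1)" by (simp add: VV_def)
  finally show ?thesis .
qed

lemma per_color:
  assumes "j \<in> {1..k}"
  shows "n = card (HH j) + card (av1.L1 n c j) + card (av1.iso n c j)"
    and "card (HH j) \<le> card (av1.L1 n c j)"
  using av1.card_V[OF av1[OF assms]] av1.S2[OF av1[OF assms]]
  unfolding av1.V_def[OF av1[OF assms]] by auto


lemma no_2k:
  assumes k2: "2 \<le> k" and nk: "n = 2 ^ k"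
  shows False
proof -
  have img: "sv ` VV = Pow {1..k}"
    using card_subset_eq[OF _ img_sub] card_img nk by (simp add: card_Pow)
  have s2: "2 * (\<Sum>j\<in>{1..k}. card (HH j)) = k * n"
    using sumH img pow_sum_card[of "{1..k}"] nk by simp
  have le: "\<forall>j\<in>{1..k}. 2 * card (HH j) \<le> n" using per_color by fastforce
  have eq: "\<forall>j\<in>{1..k}. 2 * card (HH j) = n"
  proof (rule ccontr)
    assume "\<not> (\<forall>j\<in>{1..k}. 2 * card (HH j) = n)"
    then obtain j where "j \<in> {1..k}" "2 * card (HH j) \<noteq> n" by blast
    then have "\<exists>j\<in>{1..k}. 2 * card (HH j) < n" using le by (metis le_neq_implies_less)
    then have "(\<Sum>j\<in>{1..k}. 2 * card (HH j)) < (\<Sum>j\<in>{1..k}. n)"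
      using le by (intro sum_strict_mono_ex1) auto
    then show False using s2 by (simp add: sum_distrib_left)
  qed
  have hd: "\<forall>j\<in>{1..k}. (\<Sum>h\<in>HH j. col_deg n c j h) = card (HH j)"
  proof
    fix j assume j: "j \<in> {1..k}"
    interpret a: av1 n c j using av1[OF j] .
    have "card a.L1 = card a.H" using per_color[OF j] eq j by fastforce
    then have "a.G = {}" by (rule a.Z)
    then show "(\<Sum>h\<in>HH j. col_deg n c j h) = card (HH j)" using a.E2 by simp
  qed
  have "n * (n - 1) = 2 * (\<Sum>j\<in>{1..k}. card (HH j))" using degsum hd by simp
  then have "n * (n - 1) = k * n" using s2 by simp
  moreover have "0 < n" using nk by simp
  ultimately have "n - 1 = k" by simp
  moreover have "k + 2 \<le> 2 ^ k"
  proof -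
    obtain m where m: "k = m + 2" using k2 by (metis add.commute le_Suc_ex)
    have "m + 4 \<le> 2 ^ (m + 2)" by (induction m) auto
    then show ?thesis using m by simp
  qed
  ultimately show False using nk by simp
qed


lemma two_elems:
  assumes "finite A" "2 \<le> card A"
  obtains a b where "a \<in> A" "b \<in> A" "a \<noteq> b"
proof -
  have "A \<noteq> {}" using assms by auto
  then obtain a where a: "a \<in> A" by blast
  have "A - {a} \<noteq> {}"
  proof
    assume "A - {a} = {}"
    then have "A \<subseteq> {a}" by blast
    then have "card A \<le> 1" using card_mono[of "{a}" A] by simp
    then show False using assms by simp
  qed
  then obtain b where "b \<in> A" "b \<noteq> a" by blast
  then show ?thesis using that a by blast
qed

lemma sd_mem: "x \<in> sd A B \<longleftrightarrow> (x \<in> A \<longleftrightarrow> x \<notin> B)"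
  unfolding sd_def by auto

lemma sd_inv: "sd (sd A B) B = A"
  unfolding sd_def by auto

lemma sd_inj: "sd A B = sd A C \<Longrightarrow> B = C"
  by (metis (no_types, lifting) set_eqI sd_mem)

lemma sd_sub: "A \<subseteq> {1..k} \<Longrightarrow> B \<subseteq> {1..k} \<Longrightarrow> sd A B \<subseteq> {1..k}"
  unfolding sd_def by auto

lemma onediff:
  assumes "x \<in> VV" "z \<in> VV" "sv z = sd (sv x) {i}"
  shows "col_edge n c i x z"
proof -
  have "x \<noteq> z"
  proof
    assume "x = z"
    then have "i \<in> sv x \<longleftrightarrow> i \<in> sd (sv x) {i}" using assms(3) by simp
    then show False by (simp add: sd_mem)
  qed
  then have dc: "c x z \<in> {1..k} \<and> (c x z \<in> sv x \<longleftrightarrow> c x z \<notin> sv z)"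
    using diffcol assms(1,2) unfolding VV_def by auto
  then have "c x z = i" using assms(3) by (auto simp: sd_mem)
  then show ?thesis using \<open>x \<noteq> z\<close> assms(1,2) by (simp add: col_edge_def VV_def)
qed

lemma aux2:
  assumes img: "sv ` VV = Pow {1..k} - {m}"
    and x: "x \<in> VV" and y: "y \<in> VV" and i: "i \<in> {1..k}" and l: "l \<in> {1..k}" and il: "i \<noteq> l"
    and sy: "sv y = sd (sv x) {i, l}" and cxy: "c x y = i" and K: "av1.K2 n c i x"
  shows False
proof -
  interpret a: av1 n c i using av1[OF i] .
  have xy: "x \<noteq> y"
  proof
    assume "x = y"
    then have "i \<in> sv x \<longleftrightarrow> i \<in> sd (sv x) {i, l}" using sy by simp
    then show False by (simp add: sd_mem)
  qed
  have e: "a.adj x y" using x y xy cxy by (simp add: col_edge_def VV_def)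
  have dx: "a.d x \<le> 1" and nb: "\<And>u. a.adj x u \<Longrightarrow> a.d u \<le> 1" using K unfolding a.K2_def by auto
  have ex: "\<And>T. T \<subseteq> {1..k} \<Longrightarrow> T \<noteq> m \<Longrightarrow> \<exists>y\<in>VV. sv y = T"
    using img by (metis (no_types, lifting) DiffI Pow_iff imageE singletonD)
  have subx: "sv x \<subseteq> {1..k}" by (rule sv_sub)
  show False
  proof (cases "sd (sv x) {i} = m")
    case False
    have "sd (sv x) {i} \<subseteq> {1..k}" using sd_sub[OF subx] i by auto
    then obtain z where z: "z \<in> VV" "sv z = sd (sv x) {i}" using ex False by blast
    have "a.adj x z" using onediff[OF x z] .
    moreover have "z \<noteq> y"
    proof
      assume "z = y"
      then have "sd (sv x) {i} = sd (sv x) {i, l}" using z sy by simp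
      then have "{i} = {i, l}" by (rule sd_inj)
      then show False using il by auto
    qed
    ultimately show False using a.le1_unique[OF dx e] by blast
  next
    case True
    have "sd (sv x) {l} \<noteq> m"
    proof
      assume "sd (sv x) {l} = m"
      then have "sd (sv x) {l} = sd (sv x) {i}" using True by simp
      then have "{l} = {i}" by (rule sd_inj)
      then show False using il by auto
    qed
    moreover have "sd (sv x) {l} \<subseteq> {1..k}" using sd_sub[OF subx] l by auto
    ultimately obtain w where w: "w \<in> VV" "sv w = sd (sv x) {l}" using ex by blast
    have "sv y = sd (sv w) {i}" using sy w(2) il unfolding sd_def by auto
    then have "a.adj w y" using onediff[OF w(1) y] by simp
    then have wy: "a.adj y w" by (rule a.adj_sym)
    have yx: "a.adj y x" using a.adj_sym[OF e] .
    have dy: "a.d y \<le> 1" using nb[OF e] .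
    have "w \<noteq> x"
    proof
      assume "w = x"
      then have "sv x = sd (sv x) {l}" using w by simp
      then have "l \<in> sv x \<longleftrightarrow> l \<in> sd (sv x) {l}" by simp
      then show False by (simp add: sd_mem)
    qed
    then show False using a.le1_unique[OF dy wy yx] by simp
  qed
qed

lemma dist2:
  assumes img: "sv ` VV = Pow {1..k} - {m}"
    and x: "x \<in> VV" and i: "i \<in> {1..k}" and l: "l \<in> {1..k}" and il: "i \<noteq> l"
    and Ki: "av1.K2 n c i x" and Kl: "av1.K2 n c l x"
  shows "sd (sv x) {i, l} = m"
proof (rule ccontr)
  assume ne: "sd (sv x) {i, l} \<noteq> m"
  have "sd (sv x) {i, l} \<subseteq> {1..k}" using sd_sub[OF sv_sub] i l by auto
  then have "sd (sv x) {i, l} \<in> sv ` VV" using img ne by auto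
  then obtain y where y: "y \<in> VV" "sv y = sd (sv x) {i, l}" by auto
  have xy: "x \<noteq> y"
  proof
    assume "x = y"
    then have "i \<in> sv x \<longleftrightarrow> i \<in> sd (sv x) {i, l}" using y by simp
    then show False by (simp add: sd_mem)
  qed
  then have dc: "c x y \<in> {1..k} \<and> (c x y \<in> sv x \<longleftrightarrow> c x y \<notin> sv y)"
    using diffcol x y(1) unfolding VV_def by auto
  then have "c x y = i \<or> c x y = l" using y(2) by (auto simp: sd_mem)
  then show False
  proof
    assume "c x y = i"
    then show False using aux2[OF img x y(1) i l il y(2)] Ki by blast
  next
    assume "c x y = l"
    moreover have "sv y = sd (sv x) {l, i}" using y(2) by (simp add: insert_commute)
    ultimately show False using aux2[OF img x y(1) l i] il Kl by blast
  qed
qed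

definition J where "J x = {j\<in>{1..k}. av1.K2 n c j x}"

lemma J_fin: "finite (J x)" unfolding J_def by simp

lemma J_bound:
  assumes img: "sv ` VV = Pow {1..k} - {m}" and x: "x \<in> VV" and J2: "2 \<le> card (J x)"
  shows "card (J x) \<le> 2 \<and> sv x \<in> (\<lambda>P. sd m P) ` {P. P \<subseteq> {1..k} \<and> card P = 2}"
proof -
  obtain i l where il: "i \<in> J x" "l \<in> J x" "i \<noteq> l" using two_elems[OF J_fin J2] by blast
  have i: "i \<in> {1..k}" "av1.K2 n c i x" and l: "l \<in> {1..k}" "av1.K2 n c l x"
    using il unfolding J_def by auto
  have m: "sd (sv x) {i, l} = m" using dist2[OF img x i(1) l(1) il(3) i(2) l(2)] .
  have "J x \<subseteq> {i, l}"
  proof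
    fix p assume p: "p \<in> J x"
    show "p \<in> {i, l}"
    proof (rule ccontr)
      assume np: "p \<notin> {i, l}"
      have pk: "p \<in> {1..k}" "av1.K2 n c p x" using p unfolding J_def by auto
      have "sd (sv x) {i, p} = m" using dist2[OF img x i(1) pk(1) _ i(2) pk(2)] np by auto
      then have "{i, p} = {i, l}" using m sd_inj by metis
      then show False using np by auto
    qed
  qed
  then have "card (J x) \<le> 2" using card_mono[of "{i, l}" "J x"] il(3) by auto
  moreover have "sv x = sd m {i, l}" using m sd_inv by metis
  moreover have "{i, l} \<subseteq> {1..k} \<and> card {i, l} = 2" using i l il(3) by auto
  ultimately show ?thesis by blast
qed

lemma sumJ:
  assumes img: "sv ` VV = Pow {1..k} - {m}"
  shows "(\<Sum>x\<in>VV. card (J x)) \<le> n + (k choose 2)"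
proof -
  define X2 where "X2 = {x\<in>VV. 2 \<le> card (J x)}"
  have "sv ` X2 \<subseteq> (\<lambda>P. sd m P) ` {P. P \<subseteq> {1..k} \<and> card P = 2}"
    using J_bound[OF img] unfolding X2_def by blast
  moreover have fin: "finite {P. P \<subseteq> {1..k} \<and> card P = 2}"
    by (rule finite_subset[of _ "Pow {1..k}"]) auto
  ultimately have "card (sv ` X2) \<le> card ((\<lambda>P. sd m P) ` {P. P \<subseteq> {1..k} \<and> card P = 2})"
    by (intro card_mono finite_imageI)
  also have "\<dots> \<le> card {P. P \<subseteq> {1..k} \<and> card P = 2}" using fin by (rule card_image_le)
  also have "\<dots> = k choose 2" using n_subsets[of "{1..k}" 2] by simp
  finally have c2: "card (sv ` X2) \<le> k choose 2" .
  have "inj_on sv X2" using inj_sv unfolding X2_def by (rule inj_on_subset) auto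
  then have cX: "card X2 \<le> k choose 2" using c2 card_image by metis
  have "(\<Sum>x\<in>VV. card (J x)) \<le> (\<Sum>x\<in>VV. 1 + (if x \<in> X2 then 1 else 0))"
  proof (rule sum_mono)
    fix x assume x: "x \<in> VV"
    show "card (J x) \<le> 1 + (if x \<in> X2 then 1 else 0)"
    proof (cases "x \<in> X2")
      case True
      then show ?thesis using J_bound[OF img x] unfolding X2_def by auto
    next
      case False then show ?thesis using x unfolding X2_def by auto
    qed
  qed
  also have "\<dots> = n + card X2"
  proof -
    have sub: "X2 \<subseteq> VV" unfolding X2_def by auto
    have "(\<Sum>x\<in>VV. 1 + (if x \<in> X2 then 1 else 0)) = (\<Sum>x\<in>VV. 1) + (\<Sum>x\<in>VV. if x \<in> X2 then 1 else (0::nat))"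
      by (rule sum.distrib)
    also have "(\<Sum>x\<in>VV. if x \<in> X2 then 1 else (0::nat)) = card (VV \<inter> X2)"
      by (simp add: sum.If_cases VV_def)
    also have "VV \<inter> X2 = X2" using sub by blast
    finally show ?thesis by (simp add: VV_def)
  qed
  finally show ?thesis using cX by simp
qed


lemma no_2k1:
  assumes k4: "4 \<le> k" and nk: "n = 2 ^ k - 1"
  shows False
proof -
  have fP: "finite (Pow {1..k})" by simp
  have p1: "1 \<le> (2::nat) ^ k" by simp
  have "card (Pow {1..k} - sv ` VV) = 2 ^ k - n"
    using card_Diff_subset[OF finite_imageI img_sub] card_img by (simp add: card_Pow VV_def)
  also have "\<dots> = 1" using nk p1 by simp
  finally obtain m where m: "Pow {1..k} - sv ` VV = {m}" by (rule card_1_singletonE)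
  have img: "sv ` VV = Pow {1..k} - {m}" using m img_sub by blast
  have mP: "m \<in> Pow {1..k}" using m by blast
  then have cm: "card m \<le> k" using card_mono[of "{1..k}" m] by simp
  have s1: "(\<Sum>j\<in>{1..k}. card (HH j)) = (\<Sum>S\<in>Pow {1..k}. card S) - card m"
    using sumH img sum_diff1_nat[of card "Pow {1..k}" m] mP by simp
  have s2: "2 * (\<Sum>S\<in>Pow {1..k}. card S) = k * 2 ^ k" using pow_sum_card[of "{1..k}"] by simp
  have "card m \<le> (\<Sum>S\<in>Pow {1..k}. card S)" using member_le_sum[of m "Pow {1..k}" card] mP fP by simp
  then have sumH2: "k * n \<le> 2 * (\<Sum>j\<in>{1..k}. card (HH j)) + k"
    using s1 s2 cm nk by (simp add: diff_mult_distrib2)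
  have odd: "odd n" using nk k4 by (simp add: odd_pos)
  have le: "\<forall>j\<in>{1..k}. 2 * card (HH j) + 1 \<le> n"
  proof
    fix j assume j: "j \<in> {1..k}"
    have "2 * card (HH j) \<le> n" using per_color[OF j] by simp
    moreover have "2 * card (HH j) \<noteq> n"
    proof
      assume "2 * card (HH j) = n"
      then have "even n" by (metis dvd_triv_left)
      then show False using odd by simp
    qed
    ultimately show "2 * card (HH j) + 1 \<le> n" by simp
  qed
  have eq: "\<forall>j\<in>{1..k}. 2 * card (HH j) + 1 = n"
  proof (rule ccontr)
    assume "\<not> (\<forall>j\<in>{1..k}. 2 * card (HH j) + 1 = n)"
    then obtain j where "j \<in> {1..k}" "2 * card (HH j) + 1 \<noteq> n" by blast
    then have "\<exists>j\<in>{1..k}. 2 * card (HH j) + 1 < n" using le by (metis le_neq_implies_less)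
    then have "(\<Sum>j\<in>{1..k}. 2 * card (HH j) + 1) < (\<Sum>j\<in>{1..k}. n)"
      using le by (intro sum_strict_mono_ex1) auto
    moreover have "(\<Sum>j\<in>{1..k}. 2 * card (HH j) + 1) = 2 * (\<Sum>j\<in>{1..k}. card (HH j)) + k"
      by (simp only: sum.distrib sum_distrib_left) simp
    moreover have "(\<Sum>j\<in>{1..k}. n) = k * n" by simp
    ultimately show False using sumH2 by linarith
  qed
  define g where "g j = card (av1.G n c j)" for j
  have L1: "\<forall>j\<in>{1..k}. card (av1.L1 n c j) \<le> card (HH j) + 1"
    using per_color eq by fastforce
  have AMj: "\<forall>j\<in>{1..k}. card (HH j) + g j * g j \<le> (\<Sum>h\<in>HH j. col_deg n c j h)"
    using av1.AM[OF av1] L1 unfolding g_def by (simp add: power2_eq_square)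
  have BSj: "\<forall>j\<in>{1..k}. card (av1.Bs n c j) \<le> 2 * g j + 1"
    using av1.BS[OF av1] L1 unfolding g_def by simp
  define Q where "Q = (\<Sum>j\<in>{1..k}. g j * g j)"
  define Gs where "Gs = (\<Sum>j\<in>{1..k}. g j)"
  have ed: "2 * Q + k * (n - 1) \<le> n * (n - 1)"
  proof -
    have "(\<Sum>j\<in>{1..k}. card (HH j) + g j * g j) \<le> (\<Sum>j\<in>{1..k}. \<Sum>h\<in>HH j. col_deg n c j h)"
      using AMj by (intro sum_mono) blast
    then have "2 * (\<Sum>j\<in>{1..k}. card (HH j)) + 2 * Q \<le> n * (n - 1)"
      using degsum unfolding Q_def by (simp add: sum.distrib)
    moreover have "2 * (\<Sum>j\<in>{1..k}. card (HH j)) = k * (n - 1)"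
    proof -
      have "2 * (\<Sum>j\<in>{1..k}. card (HH j)) = (\<Sum>j\<in>{1..k}. 2 * card (HH j))" by (simp add: sum_distrib_left)
      also have "\<dots> = (\<Sum>j\<in>{1..k}. n - 1)"
      proof (rule sum.cong[OF refl])
        fix j assume "j \<in> {1..k}"
        then have "2 * card (HH j) + 1 = n" using eq by blast
        then show "2 * card (HH j) = n - 1" by simp
      qed
      finally show ?thesis by simp
    qed
    ultimately show ?thesis by simp
  qed
  have cs: "Gs * Gs \<le> k * Q" using cauchy[of "{1..k}" g] unfolding Gs_def Q_def by simp
  have bs: "k * n \<le> 2 * Gs + k + n + (k choose 2)"
  proof -
    have e1: "\<forall>j\<in>{1..k}. card (av1.Bs n c j) + card {x\<in>VV. av1.K2 n c j x} = n"
    proof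
      fix j assume j: "j \<in> {1..k}"
      interpret a: av1 n c j using av1[OF j] .
      have "{x\<in>VV. a.K2 x} \<subseteq> VV" by auto
      then have "card {x\<in>VV. a.K2 x} \<le> n" using card_mono[of VV] by (simp add: VV_def)
      then show "card a.Bs + card {x\<in>VV. a.K2 x} = n"
        using a.Bs_count unfolding a.V_def VV_def by simp
    qed
    then have "(\<Sum>j\<in>{1..k}. card (av1.Bs n c j)) + (\<Sum>j\<in>{1..k}. card {x\<in>VV. av1.K2 n c j x}) = k * n"
      by (simp add: sum.distrib[symmetric])
    moreover have "(\<Sum>j\<in>{1..k}. card {x\<in>VV. av1.K2 n c j x}) = (\<Sum>x\<in>VV. card (J x))"
      unfolding J_def by (rule card_swap) (auto simp: VV_def)
    moreover have "(\<Sum>j\<in>{1..k}. card (av1.Bs n c j)) \<le> (\<Sum>j\<in>{1..k}. 2 * g j + 1)"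
      using BSj by (intro sum_mono) blast
    moreover have "(\<Sum>j\<in>{1..k}. 2 * g j + 1) = 2 * Gs + k"
      unfolding Gs_def by (simp only: sum.distrib sum_distrib_left) simp
    ultimately show ?thesis using sumJ[OF img] by linarith
  qed
  have C: "2 * (k choose 2) = k * (k - 1)"
  proof -
    have "even (k * (k - 1))" by (cases "even k") auto
    then show ?thesis by (simp add: choose_two)
  qed
  show False using final_arith[OF k4 nk C cs ed bs] .
qed

end


lemma avoid_all:
  assumes "edge_coloring k n c" "\<forall>j\<in>{1..k}. \<not> 3 \<le> mp n c j"
  shows "av n k c"
proof
  show "edge_coloring k n c" by fact
  show "\<forall>j\<in>{1..k}. avoid n c j"
    using assms(2) mp_ge3 unfolding avoid_def by blast
qed

lemma upper_good:
  assumes k2: "2 \<le> k" and U: "U = 2 ^ k \<or> (4 \<le> k \<and> U = 2 ^ k - 1)"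
  shows "mk_good k 3 U"
  unfolding mk_good_def
proof (intro allI impI)
  fix n c assume nU: "U \<le> n" and col: "edge_coloring k n c"
  show "\<exists>j\<in>{1..k}. 3 \<le> mp n c j"
  proof (rule ccontr)
    assume "\<not> (\<exists>j\<in>{1..k}. 3 \<le> mp n c j)"
    then have "av n k c" using avoid_all[OF col] by blast
    then interpret a: av n k c .
    have "n \<le> 2 ^ k" by (rule a.n_le)
    show False
    proof (cases "n = 2 ^ k")
      case True then show False using a.no_2k k2 by blast
    next
      case False
      then have "4 \<le> k \<and> n = 2 ^ k - 1" using U nU \<open>n \<le> 2 ^ k\<close> by auto
      then show False using a.no_2k1 by blast
    qed
  qed
qed

lemma lower_bad:
  assumes g: "goodcol k f c" and f: "0 < f" and M: "M \<le> f"
  shows "\<not> mk_good k 3 M"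
proof
  assume "mk_good k 3 M"
  then have "\<exists>j\<in>{1..k}. 3 \<le> mp f c j" using g M unfolding mk_good_def goodcol_def by blast
  then obtain j where j: "3 \<le> mp f c j" by blast
  have "avoid f c j" using g unfolding goodcol_def by blast
  then have "mp f c j < 3" using mp_lt3[OF f] by blast
  then show False using j by simp
qed

lemma Mk_bounds:
  assumes "mk_good k m U" and "\<And>M. M \<le> F \<Longrightarrow> \<not> mk_good k m M"
  shows "F < M_k k m \<and> M_k k m \<le> U"
proof
  show "M_k k m \<le> U" unfolding M_k_def using assms(1) by (rule Least_le)
  have "mk_good k m (M_k k m)" unfolding M_k_def using assms(1) by (rule LeastI)
  then show "F < M_k k m" using assms(2) by (meson not_less)
qed

theorem theorem1p3:
  shows "M_k 2 3 = 4 \<and> M_k 3 3 = 8 \<and>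
    (\<forall>k::nat. k \<ge> 4 \<longrightarrow>
       (3/4) * 2 ^ k + 2 \<le> real (M_k k 3) \<and> real (M_k k 3) \<le> 2 ^ k - 1)"
proof (intro conjI allI impI)
  have "3 < M_k 2 3 \<and> M_k 2 3 \<le> 4"
  proof (rule Mk_bounds)
    show "mk_good 2 3 4" using upper_good[of 2 4] by simp
    show "\<And>M. M \<le> 3 \<Longrightarrow> \<not> mk_good 2 3 M" using lower_bad[OF goodcol_K3] by simp
  qed
  then show "M_k 2 3 = 4" by simp
next
  obtain c where c: "goodcol 3 7 c" using exist_lower[of 3] by auto
  have "7 < M_k 3 3 \<and> M_k 3 3 \<le> 8"
  proof (rule Mk_bounds)
    show "mk_good 3 3 8" using upper_good[of 3 8] by simp
    show "\<And>M. M \<le> 7 \<Longrightarrow> \<not> mk_good 3 3 M" using lower_bad[OF c] by simp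
  qed
  then show "M_k 3 3 = 8" by simp
next
  fix k :: nat assume k4: "4 \<le> k"
  obtain c where c: "goodcol k (3 * 2 ^ (k - 2) + 1) c" using exist_lower[of k] k4 by auto
  have b: "3 * 2 ^ (k - 2) + 1 < M_k k 3 \<and> M_k k 3 \<le> 2 ^ k - 1"
  proof (rule Mk_bounds)
    show "mk_good k 3 (2 ^ k - 1)" using upper_good[of k "2 ^ k - 1"] k4 by simp
    show "\<And>M. M \<le> 3 * 2 ^ (k - 2) + 1 \<Longrightarrow> \<not> mk_good k 3 M" using lower_bad[OF c] by simp
  qed
  have pk: "(2::real) ^ k = 4 * 2 ^ (k - 2)"
  proof -
    have "k = (k - 2) + 2" using k4 by simp
    then have "(2::real) ^ k = 2 ^ (k - 2) * 2 ^ 2" by (metis power_add)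
    then show ?thesis by simp
  qed
  have "3 * 2 ^ (k - 2) + 2 \<le> M_k k 3" using b by linarith
  then have "real (3 * 2 ^ (k - 2) + 2) \<le> real (M_k k 3)" by (simp only: of_nat_le_iff)
  then show "(3/4) * 2 ^ k + 2 \<le> real (M_k k 3)" using pk by simp
  have "1 \<le> (2::nat) ^ k" by simp
  then have "real (2 ^ k - 1 :: nat) = 2 ^ k - 1" by (simp add: of_nat_diff)
  then show "real (M_k k 3) \<le> 2 ^ k - 1" using b by (metis of_nat_le_iff)
qed

end
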